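(* There is a comeager set of $\alpha\in 2^{(2^{<\mathbb N})^{<\mathbb N}\times\mathbb N\times\mathbb N}$ such that for all $x,y\in(2^{\mathbb N})^{\mathbb N}$ with $x$ separated and $y$ injective and separated, the following hold (with $\gamma=\gamma_\alpha$): (i) for every finite partial function $\tau\colon N\to\{0,1\}$ there are infinitely many $(t,k)\in N$ such that the function $(s,d)\mapsto\gamma(y)(t,k)(s,d)$ extends $\tau$; (ii) for all finite partial functions $\tau_1,\tau_2\colon N\to\{0,1\}$ there are infinitely many $(s,d)\in N$ such that $(t,k)\mapsto\gamma(y)(t,k)(s,d)$ extends $\tau_1$ and $(t,k)\mapsto\gamma(x)(s,d)(t,k)$ extends $\tau_2$.
   Context: $\mathbb N=\{0,1,2,\dots\}$; $N=\mathbb N^{<\mathbb N}\times\mathbb N$, where $\mathbb N^{<\mathbb N}$ is the set of finite sequences of naturals. The space $2^{(2^{<\mathbb N})^{<\mathbb N}\times\mathbb N\times\mathbb N}$ has the product topology (the index set is countable and discrete). For $z\in 2^{\mathbb N}$ and $t=(t_1,\dots,t_l)\in\mathbb N^{<\mathbb N}$, $z\circ t=(z(t_1),\dots,z(t_l))\in 2^{<\mathbb N}$. Given $\alpha$, define $\gamma_\alpha\colon(2^{\mathbb N})^{\mathbb N}\to(2^N)^N$ by: for $x\in(2^{\mathbb N})^{\mathbb N}$, $s=(s_1,\dots,s_m)$, $t\in\mathbb N^{<\mathbb N}$, $d,k\in\mathbb N$: $\gamma_\alpha(x)(s,d)(t,k)=\alpha\big((x(s_1)\circ t,\dots,x(s_m)\circ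 t),k,d\big)$. A sequence $a\in(2^{\mathbb N})^{\mathbb N}$ is injective if $a(i)\ne a(j)$ for $i\ne j$, and separated if for all distinct $n,k\in\mathbb N$ there is $i$ with $a(i)(n)\ne a(i)(k)$. *)

theory Defs
  imports "HOL-Analysis.Analysis"
begin

definition nowhere_dense :: "'a::topological_space set \<Rightarrow> bool" where
  "nowhere_dense S \<longleftrightarrow> interior (closure S) = {}"

definition meager :: "'a::topological_space set \<Rightarrow> bool" where
  "meager S \<longleftrightarrow> (\<exists>F. countable F \<and> (\<forall>T\<in>F. nowhere_dense T) \<and> S \<subseteq> \<Union>F)"

definition comeager :: "'a::topological_space set \<Rightarrow> bool" where
  "comeager S \<longleftrightarrow> meager (- S)"

text \<open>N = finite sequences of naturals times naturals; 2^{<N} = bool lists.\<close>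
type_synonym NN = "nat list \<times> nat"

definition seqcomp :: "(nat \<Rightarrow> bool) \<Rightarrow> nat list \<Rightarrow> bool list" where
  "seqcomp z t = map z t"

definition gamma :: "(bool list list \<times> nat \<times> nat \<Rightarrow> bool) \<Rightarrow> (nat \<Rightarrow> nat \<Rightarrow> bool)
    \<Rightarrow> NN \<Rightarrow> NN \<Rightarrow> bool" where
  "gamma \<alpha> x sd tk = \<alpha> (map (\<lambda>si. seqcomp (x si) (fst tk)) (fst sd), snd tk, snd sd)"

definition injective_seq :: "(nat \<Rightarrow> nat \<Rightarrow> bool) \<Rightarrow> bool" where
  "injective_seq a \<longleftrightarrow> (\<forall>i j. i \<noteq> j \<longrightarrow> a i \<noteq> a j)"

definition separated :: "(nat \<Rightarrow> nat \<Rightarrow> bool) \<Rightarrow> bool" where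
  "separated a \<longleftrightarrow> (\<forall>n k. n \<noteq> k \<longrightarrow> (\<exists>i. a i n \<noteq> a i k))"

definition finite_partial :: "(NN \<rightharpoonup> bool) \<Rightarrow> bool" where
  "finite_partial \<tau> \<longleftrightarrow> finite (dom \<tau>)"

definition extends :: "(NN \<Rightarrow> bool) \<Rightarrow> (NN \<rightharpoonup> bool) \<Rightarrow> bool" where
  "extends f \<tau> \<longleftrightarrow> (\<forall>q\<in>dom \<tau>. \<tau> q = Some (f q))"

end

theory Submission
  imports Defs
begin


type_synonym KL = "((bool list list \<times> nat) \<times> bool) list"

definition Good :: "KL \<Rightarrow> KL \<Rightarrow> nat \<Rightarrow> (bool list list \<times> nat \<times> nat \<Rightarrow> bool) \<Rightarrow> bool" where
  "Good l1 l2 m \<alpha> \<longleftrightarrow> (\<forall>w j b. map_of l1 (w,j) = Some b \<longrightarrow> \<alpha> (w,m,j) = b) \<and>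
                        (\<forall>w j b. map_of l2 (w,j) = Some b \<longrightarrow> \<alpha> (w,j,m) = b)"

definition UU :: "KL \<Rightarrow> KL \<Rightarrow> nat \<Rightarrow> (bool list list \<times> nat \<times> nat \<Rightarrow> bool) set" where
  "UU l1 l2 n = {\<alpha>. \<exists>m\<ge>n. Good l1 l2 m \<alpha>}"

lemma open_Good: "open {\<alpha>. Good l1 l2 m \<alpha>}"
proof -
  have e1: "{\<alpha>. \<forall>w j b. map_of l1 (w,j) = Some b \<longrightarrow> \<alpha> (w,m,j) = b}
     = {f. \<forall>i\<in>dom (map_of l1). f ((\<lambda>(w,j). (w,m,j)) i) \<in> (\<lambda>i. {the (map_of l1 i)}) i}"
    by (auto simp: dom_def; metis option.sel)
  have e2: "{\<alpha>. \<forall>w j b. map_of l2 (w,j) = Some b \<longrightarrow> \<alpha> (w,j,m) = b}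
     = {f. \<forall>i\<in>dom (map_of l2). f ((\<lambda>(w,j). (w,j,m)) i) \<in> (\<lambda>i. {the (map_of l2 i)}) i}"
    by (auto simp: dom_def; metis option.sel)
  have o1: "open {\<alpha>::bool list list \<times> nat \<times> nat \<Rightarrow> bool. \<forall>w j b. map_of l1 (w,j) = Some b \<longrightarrow> \<alpha> (w,m,j) = b}"
    unfolding e1 by (rule product_topology_basis') (auto simp: finite_dom_map_of open_discrete)
  have o2: "open {\<alpha>::bool list list \<times> nat \<times> nat \<Rightarrow> bool. \<forall>w j b. map_of l2 (w,j) = Some b \<longrightarrow> \<alpha> (w,j,m) = b}"
    unfolding e2 by (rule product_topology_basis') (auto simp: finite_dom_map_of open_discrete)
  have "{\<alpha>. Good l1 l2 m \<alpha>} = {\<alpha>::bool list list \<times> nat \<times> nat \<Rightarrow> bool. \<forall>w j b. map_of l1 (w,j) = Some b \<longrightarrow> \<alpha> (w,m,j) = b}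
     \<inter> {\<alpha>. \<forall>w j b. map_of l2 (w,j) = Some b \<longrightarrow> \<alpha> (w,j,m) = b}"
    by (auto simp: Good_def)
  then show ?thesis using o1 o2 by (simp add: open_Int)
qed

lemma open_UU: "open (UU l1 l2 n)"
proof -
  have "UU l1 l2 n = (\<Union>m\<in>{n..}. {\<alpha>. Good l1 l2 m \<alpha>})" by (auto simp: UU_def)
  then show ?thesis using open_Good by auto
qed

lemma dense_UU:
  assumes "open W" "\<alpha>0 \<in> W"
  shows "W \<inter> UU l1 l2 n \<noteq> {}"
proof -
  have "openin (product_topology (\<lambda>i. euclidean) UNIV) W" using assms(1) by (simp add: open_fun_def)
  then obtain Uf where Uf: "finite {i. Uf i \<noteq> UNIV}" "\<alpha>0 \<in> Pi\<^sub>E UNIV Uf" "Pi\<^sub>E UNIV Uf \<subseteq> W"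
    using assms(2) unfolding openin_product_topology_alt by force
  define J where "J = {i. Uf i \<noteq> UNIV}"
  define A where "A = insert 0 ((\<lambda>i. fst (snd i)) ` J \<union> (\<lambda>i. snd (snd i)) ` J
       \<union> (\<lambda>i. snd (fst i)) ` set l1 \<union> (\<lambda>i. snd (fst i)) ` set l2)"
  have fA: "finite A" using Uf(1) by (simp add: A_def J_def)
  define m where "m = Max A + n + 1"
  have big: "a \<in> A \<Longrightarrow> a < m" for a using Max_ge[OF fA] by (fastforce simp: m_def)
  define \<alpha>1 where "\<alpha>1 = (\<lambda>key. if key \<in> J then \<alpha>0 key else
      (case key of (w,a,c) \<Rightarrow> if a = m \<and> map_of l1 (w,c) \<noteq> None then the (map_of l1 (w,c))
        else if c = m \<and> map_of l2 (w,a) \<noteq> None then the (map_of l2 (w,a)) else \<alpha>0 key))"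
  have "\<alpha>1 \<in> Pi\<^sub>E UNIV Uf"
    unfolding PiE_UNIV_domain
  proof
    fix i
    show "\<alpha>1 i \<in> Uf i"
    proof (cases "i \<in> J")
      case True
      then show ?thesis using Uf(2) by (auto simp: \<alpha>1_def PiE_UNIV_domain)
    next
      case False
      then show ?thesis by (auto simp: J_def)
    qed
  qed
  then have "\<alpha>1 \<in> W" using Uf(3) by blast
  moreover have G: "Good l1 l2 m \<alpha>1"
    unfolding Good_def
  proof (intro conjI allI impI)
    fix w j b assume h: "map_of l1 (w,j) = Some b"
    have "(w,m,j) \<notin> J" using big[of m] by (force simp: A_def)
    then show "\<alpha>1 (w,m,j) = b" using h by (simp add: \<alpha>1_def)
  next
    fix w j b assume h: "map_of l2 (w,j) = Some b"
    have "(w,j,m) \<notin> J" using big[of m] by (force simp: A_def)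
    moreover have "j < m" using big[of j] map_of_SomeD[OF h] by (force simp: A_def)
    ultimately show "\<alpha>1 (w,j,m) = b" using h by (simp add: \<alpha>1_def)
  qed
  moreover have "m \<ge> n" by (simp add: m_def)
  ultimately have "\<alpha>1 \<in> UU l1 l2 n" unfolding UU_def by blast
  with \<open>\<alpha>1 \<in> W\<close> show ?thesis by blast
qed

lemma nowhere_dense_UU: "nowhere_dense (- UU l1 l2 n)"
proof -
  have c: "closed (- UU l1 l2 n)" using open_UU by (simp add: closed_def)
  have "interior (- UU l1 l2 n) = {}"
  proof (rule ccontr)
    assume "interior (- UU l1 l2 n) \<noteq> {}"
    then obtain a where "a \<in> interior (- UU l1 l2 n)" by blast
    then have "interior (- UU l1 l2 n) \<inter> UU l1 l2 n \<noteq> {}" by (intro dense_UU) auto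
    then show False using interior_subset by blast
  qed
  then show ?thesis using c by (simp add: nowhere_dense_def closure_closed)
qed



lemma map_of_inj:
  "inj_on \<kappa> (set xs) \<Longrightarrow> p \<in> set xs \<Longrightarrow> map_of (map (\<lambda>p. (\<kappa> p, v p)) xs) (\<kappa> p) = Some (v p)"
proof (induction xs)
  case (Cons a xs)
  then show ?case by (cases "p = a") (auto simp: inj_on_def)
qed simp

lemma hitting:
  assumes "finite P" "\<forall>r\<in>P. \<exists>i. R r i"
  shows "\<exists>s. \<forall>r\<in>P. \<exists>i\<in>set s. R r i"
  using assms
proof (induction P rule: finite_induct)
  case empty then show ?case by simp
next
  case (insert r P)
  then obtain s where s: "\<forall>r\<in>P. \<exists>i\<in>set s. R r i" by auto
  obtain i where "R r i" using insert.prems by auto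
  then show ?case using s by (intro exI[of _ "i # s"]) auto
qed

lemma keyA_neq:
  "i \<in> set s \<Longrightarrow> map (z i) a \<noteq> map (z i) a' \<Longrightarrow>
   map (\<lambda>si. map (z si) a) s \<noteq> map (\<lambda>si. map (z si) a') s"
  by (auto simp: map_eq_conv)

lemma keyB_neq:
  assumes "n \<in> set s" "map (\<lambda>ai. y ai n) a \<noteq> map (\<lambda>ai. y ai n) a'"
  shows "map (\<lambda>ai. map (y ai) s) a \<noteq> map (\<lambda>ai. map (y ai) s) a'"
proof
  assume e: "map (\<lambda>ai. map (y ai) s) a = map (\<lambda>ai. map (y ai) s) a'"
  obtain idx where idx: "idx < length s" "s ! idx = n" using assms(1) by (auto simp: in_set_conv_nth)
  have "map (\<lambda>l. l ! idx) (map (\<lambda>ai. map (y ai) s) a) = map (\<lambda>l. l ! idx) (map (\<lambda>ai. map (y ai) s) a')"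
    using e by simp
  then have "map (\<lambda>ai. y ai n) a = map (\<lambda>ai. y ai n) a'" using idx by (simp add: comp_def)
  then show False using assms(2) by simp
qed

lemma sepA:
  assumes "separated z" "finite A"
  shows "\<exists>s. \<forall>a\<in>A. \<forall>a'\<in>A. a \<noteq> a' \<longrightarrow> (\<exists>i\<in>set s. map (z i) a \<noteq> map (z i) a')"
proof -
  have "\<exists>i. map (z i) a \<noteq> map (z i) a'" if ne: "a \<noteq> a'" for a a'
  proof (cases "length a = length a'")
    case True
    then obtain j where j: "j < length a" "a ! j \<noteq> a' ! j" using ne True by (auto simp: list_eq_iff_nth_eq)
    then obtain i where "z i (a!j) \<noteq> z i (a'!j)" using assms(1) by (auto simp: separated_def)
    then have "map (z i) a ! j \<noteq> map (z i) a' ! j" using j True by simp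
    then have "map (z i) a \<noteq> map (z i) a'" by auto
    then show ?thesis by blast
  next
    case False
    then show ?thesis by (intro exI[of _ 0]) (auto dest: arg_cong[of _ _ length])
  qed
  then have "\<forall>r\<in>{(a,a'). a \<in> A \<and> a' \<in> A \<and> a \<noteq> a'}. \<exists>i. (\<lambda>(a,a') i. map (z i) a \<noteq> map (z i) a') r i"
    by auto
  moreover have "finite {(a,a'). a \<in> A \<and> a' \<in> A \<and> a \<noteq> a'}"
    by (rule finite_subset[of _ "A \<times> A"]) (use assms(2) in auto)
  ultimately obtain s where "\<forall>r\<in>{(a,a'). a \<in> A \<and> a' \<in> A \<and> a \<noteq> a'}. \<exists>i\<in>set s. (\<lambda>(a,a') i. map (z i) a \<noteq> map (z i) a') r i"
    using hitting by blast
  then show ?thesis by auto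
qed

lemma sepB:
  assumes "injective_seq y" "finite A"
  shows "\<exists>s. \<forall>a\<in>A. \<forall>a'\<in>A. a \<noteq> a' \<longrightarrow> (\<exists>n\<in>set s. map (\<lambda>ai. y ai n) a \<noteq> map (\<lambda>ai. y ai n) a')"
proof -
  have "\<exists>n. map (\<lambda>ai. y ai n) a \<noteq> map (\<lambda>ai. y ai n) a'" if ne: "a \<noteq> a'" for a a'
  proof (cases "length a = length a'")
    case True
    then obtain j where j: "j < length a" "a ! j \<noteq> a' ! j" using ne True by (auto simp: list_eq_iff_nth_eq)
    then have "y (a!j) \<noteq> y (a'!j)" using assms(1) by (auto simp: injective_seq_def)
    then obtain n where "y (a!j) n \<noteq> y (a'!j) n" by (auto simp: fun_eq_iff)
    then have "map (\<lambda>ai. y ai n) a ! j \<noteq> map (\<lambda>ai. y ai n) a' ! j" using j True by simp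
    then have "map (\<lambda>ai. y ai n) a \<noteq> map (\<lambda>ai. y ai n) a'" by auto
    then show ?thesis by blast
  next
    case False
    then show ?thesis by (intro exI[of _ 0]) (auto dest: arg_cong[of _ _ length])
  qed
  then have "\<forall>r\<in>{(a,a'). a \<in> A \<and> a' \<in> A \<and> a \<noteq> a'}. \<exists>i. (\<lambda>(a,a') n. map (\<lambda>ai. y ai n) a \<noteq> map (\<lambda>ai. y ai n) a') r i"
    by auto
  moreover have "finite {(a,a'). a \<in> A \<and> a' \<in> A \<and> a \<noteq> a'}"
    by (rule finite_subset[of _ "A \<times> A"]) (use assms(2) in auto)
  ultimately obtain s where "\<forall>r\<in>{(a,a'). a \<in> A \<and> a' \<in> A \<and> a \<noteq> a'}. \<exists>i\<in>set s. (\<lambda>(a,a') n. map (\<lambda>ai. y ai n) a \<noteq> map (\<lambda>ai. y ai n) a') r i"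
    using hitting by blast
  then show ?thesis by auto
qed

lemma inf_lemma:
  fixes S :: "('a \<times> nat) set"
  assumes "\<forall>n. \<exists>m\<ge>n. (s, m) \<in> S"
  shows "infinite S"
proof
  assume "finite S"
  then have f: "finite (snd ` S)" by simp
  obtain m where "m \<ge> Max (snd ` S) + 1" "(s,m) \<in> S" using assms by blast
  moreover have "m \<le> Max (snd ` S)" using Max_ge[OF f, of m] \<open>(s,m) \<in> S\<close> by (simp add: image_iff) (metis snd_conv)
  ultimately show False by simp
qed

lemma build_list:
  assumes "finite (dom \<tau>)" "inj_on \<kappa> (dom \<tau>)"
  shows "\<exists>l. \<forall>q\<in>dom \<tau>. map_of l (\<kappa> q) = \<tau> q"
proof -
  obtain xs where xs: "set xs = dom \<tau>" using finite_list[OF assms(1)] by blast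
  show ?thesis
  proof (intro exI ballI)
    fix q assume q: "q \<in> dom \<tau>"
    have "map_of (map (\<lambda>p. (\<kappa> p, the (\<tau> p))) xs) (\<kappa> q) = Some (the (\<tau> q))"
      using map_of_inj[of \<kappa> xs q "\<lambda>p. the (\<tau> p)"] xs assms(2) q by simp
    also have "\<dots> = \<tau> q" using q by auto
    finally show "map_of (map (\<lambda>p. (\<kappa> p, the (\<tau> p))) xs) (\<kappa> q) = \<tau> q" .
  qed
qed



lemma main_inc:
  assumes \<alpha>: "\<And>l1 l2 n. \<alpha> \<in> UU l1 l2 n"
    and x: "separated x" and yi: "injective_seq y" and ys: "separated y"
  shows "(\<forall>\<tau>. finite_partial \<tau> \<longrightarrow>
          infinite {p. extends (\<lambda>q. gamma \<alpha> y p q) \<tau>}) \<and>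
       (\<forall>\<tau>1 \<tau>2. finite_partial \<tau>1 \<and> finite_partial \<tau>2 \<longrightarrow>
          infinite {q. extends (\<lambda>p. gamma \<alpha> y p q) \<tau>1 \<and> extends (\<lambda>p. gamma \<alpha> x q p) \<tau>2})"
proof (intro conjI allI impI)
  fix \<tau> :: "NN \<rightharpoonup> bool" assume "finite_partial \<tau>"
  then have fd: "finite (dom \<tau>)" by (simp add: finite_partial_def)
  obtain s where s: "\<forall>a\<in>fst ` dom \<tau>. \<forall>a'\<in>fst ` dom \<tau>. a \<noteq> a' \<longrightarrow> (\<exists>i\<in>set s. map (y i) a \<noteq> map (y i) a')"
    using sepA[OF ys, of "fst ` dom \<tau>"] fd by blast
  define \<kappa> where "\<kappa> = (\<lambda>q::NN. (map (\<lambda>si. map (y si) (fst q)) s, snd q))"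
  have inj: "inj_on \<kappa> (dom \<tau>)"
  proof (rule inj_onI)
    fix p q assume p: "p \<in> dom \<tau>" and q: "q \<in> dom \<tau>" and e: "\<kappa> p = \<kappa> q"
    have "fst p = fst q"
    proof (rule ccontr)
      assume "fst p \<noteq> fst q"
      then obtain i where "i \<in> set s" "map (y i) (fst p) \<noteq> map (y i) (fst q)" using s p q by blast
      then show False using keyA_neq e by (auto simp: \<kappa>_def)
    qed
    moreover have "snd p = snd q" using e by (simp add: \<kappa>_def)
    ultimately show "p = q" by (simp add: prod_eq_iff)
  qed
  obtain l where l: "\<forall>q\<in>dom \<tau>. map_of l (\<kappa> q) = \<tau> q" using build_list[OF fd inj] by blast
  show "infinite {p. extends (\<lambda>q. gamma \<alpha> y p q) \<tau>}"
  proof (rule inf_lemma[of s], intro allI)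
    fix n
    obtain m where m: "m \<ge> n" "Good [] l m \<alpha>" using \<alpha>[of "[]" l n] by (auto simp: UU_def)
    have "extends (\<lambda>q. gamma \<alpha> y (s,m) q) \<tau>"
      unfolding extends_def
    proof
      fix q assume q: "q \<in> dom \<tau>"
      then obtain b where b: "\<tau> q = Some b" by auto
      then have "map_of l (fst (\<kappa> q), snd (\<kappa> q)) = Some b" using l q by simp
      then have "\<alpha> (fst (\<kappa> q), snd (\<kappa> q), m) = b" using m(2) unfolding Good_def by blast
      then show "\<tau> q = Some (gamma \<alpha> y (s,m) q)"
        using b by (simp add: gamma_def seqcomp_def \<kappa>_def)
    qed
    then show "\<exists>m\<ge>n. (s, m) \<in> {p. extends (\<lambda>q. gamma \<alpha> y p q) \<tau>}" using m(1) by blast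
  qed
next
  fix \<tau>1 \<tau>2 :: "NN \<rightharpoonup> bool" assume "finite_partial \<tau>1 \<and> finite_partial \<tau>2"
  then have fd1: "finite (dom \<tau>1)" and fd2: "finite (dom \<tau>2)" by (auto simp: finite_partial_def)
  obtain sB where sB: "\<forall>a\<in>fst ` dom \<tau>1. \<forall>a'\<in>fst ` dom \<tau>1. a \<noteq> a' \<longrightarrow> (\<exists>n\<in>set sB. map (\<lambda>ai. y ai n) a \<noteq> map (\<lambda>ai. y ai n) a')"
    using sepB[OF yi, of "fst ` dom \<tau>1"] fd1 by blast
  obtain sA where sA: "\<forall>a\<in>fst ` dom \<tau>2. \<forall>a'\<in>fst ` dom \<tau>2. a \<noteq> a' \<longrightarrow> (\<exists>i\<in>set sA. map (x i) a \<noteq> map (x i) a')"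
    using sepA[OF x, of "fst ` dom \<tau>2"] fd2 by blast
  define s where "s = sB @ sA"
  define \<kappa>1 where "\<kappa>1 = (\<lambda>p::NN. (map (\<lambda>ai. map (y ai) s) (fst p), snd p))"
  define \<kappa>2 where "\<kappa>2 = (\<lambda>p::NN. (map (\<lambda>si. map (x si) (fst p)) s, snd p))"
  have inj1: "inj_on \<kappa>1 (dom \<tau>1)"
  proof (rule inj_onI)
    fix p q assume p: "p \<in> dom \<tau>1" and q: "q \<in> dom \<tau>1" and e: "\<kappa>1 p = \<kappa>1 q"
    have "fst p = fst q"
    proof (rule ccontr)
      assume "fst p \<noteq> fst q"
      then obtain n where "n \<in> set sB" "map (\<lambda>ai. y ai n) (fst p) \<noteq> map (\<lambda>ai. y ai n) (fst q)" using sB p q by blast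
      then have "n \<in> set s" "map (\<lambda>ai. y ai n) (fst p) \<noteq> map (\<lambda>ai. y ai n) (fst q)" by (auto simp: s_def)
      then have "map (\<lambda>ai. map (y ai) s) (fst p) \<noteq> map (\<lambda>ai. map (y ai) s) (fst q)" by (rule keyB_neq)
      then show False using e by (auto simp: \<kappa>1_def)
    qed
    moreover have "snd p = snd q" using e by (simp add: \<kappa>1_def)
    ultimately show "p = q" by (simp add: prod_eq_iff)
  qed
  have inj2: "inj_on \<kappa>2 (dom \<tau>2)"
  proof (rule inj_onI)
    fix p q assume p: "p \<in> dom \<tau>2" and q: "q \<in> dom \<tau>2" and e: "\<kappa>2 p = \<kappa>2 q"
    have "fst p = fst q"
    proof (rule ccontr)
      assume "fst p \<noteq> fst q"
      then obtain i where "i \<in> set sA" "map (x i) (fst p) \<noteq> map (x i) (fst q)" using sA p q by blast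
      then have "i \<in> set s" "map (x i) (fst p) \<noteq> map (x i) (fst q)" by (auto simp: s_def)
      then show False using keyA_neq e by (auto simp: \<kappa>2_def)
    qed
    moreover have "snd p = snd q" using e by (simp add: \<kappa>2_def)
    ultimately show "p = q" by (simp add: prod_eq_iff)
  qed
  obtain l1 where l1: "\<forall>q\<in>dom \<tau>1. map_of l1 (\<kappa>1 q) = \<tau>1 q" using build_list[OF fd1 inj1] by blast
  obtain l2 where l2: "\<forall>q\<in>dom \<tau>2. map_of l2 (\<kappa>2 q) = \<tau>2 q" using build_list[OF fd2 inj2] by blast
  show "infinite {q. extends (\<lambda>p. gamma \<alpha> y p q) \<tau>1 \<and> extends (\<lambda>p. gamma \<alpha> x q p) \<tau>2}"
  proof (rule inf_lemma[of s], intro allI)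
    fix n
    obtain m where m: "m \<ge> n" "Good l1 l2 m \<alpha>" using \<alpha>[of l1 l2 n] by (auto simp: UU_def)
    have "extends (\<lambda>p. gamma \<alpha> y p (s,m)) \<tau>1"
      unfolding extends_def
    proof
      fix q assume q: "q \<in> dom \<tau>1"
      then obtain b where b: "\<tau>1 q = Some b" by auto
      then have "map_of l1 (fst (\<kappa>1 q), snd (\<kappa>1 q)) = Some b" using l1 q by simp
      then have "\<alpha> (fst (\<kappa>1 q), m, snd (\<kappa>1 q)) = b" using m(2) unfolding Good_def by blast
      then show "\<tau>1 q = Some (gamma \<alpha> y q (s,m))"
        using b by (simp add: gamma_def seqcomp_def \<kappa>1_def)
    qed
    moreover have "extends (\<lambda>p. gamma \<alpha> x (s,m) p) \<tau>2"
      unfolding extends_def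
    proof
      fix q assume q: "q \<in> dom \<tau>2"
      then obtain b where b: "\<tau>2 q = Some b" by auto
      then have "map_of l2 (fst (\<kappa>2 q), snd (\<kappa>2 q)) = Some b" using l2 q by simp
      then have "\<alpha> (fst (\<kappa>2 q), snd (\<kappa>2 q), m) = b" using m(2) unfolding Good_def by blast
      then show "\<tau>2 q = Some (gamma \<alpha> x (s,m) q)"
        using b by (simp add: gamma_def seqcomp_def \<kappa>2_def)
    qed
    ultimately show "\<exists>m\<ge>n. (s, m) \<in> {q. extends (\<lambda>p. gamma \<alpha> y p q) \<tau>1 \<and> extends (\<lambda>p. gamma \<alpha> x q p) \<tau>2}"
      using m(1) by blast
  qed
qed

theorem lemma4p3:
  shows "comeager {\<alpha> :: bool list list \<times> nat \<times> nat \<Rightarrow> bool.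
     \<forall>x y. separated x \<and> injective_seq y \<and> separated y \<longrightarrow>
       (\<forall>\<tau>. finite_partial \<tau> \<longrightarrow>
          infinite {p. extends (\<lambda>q. gamma \<alpha> y p q) \<tau>}) \<and>
       (\<forall>\<tau>1 \<tau>2. finite_partial \<tau>1 \<and> finite_partial \<tau>2 \<longrightarrow>
          infinite {q. extends (\<lambda>p. gamma \<alpha> y p q) \<tau>1 \<and> extends (\<lambda>p. gamma \<alpha> x q p) \<tau>2})}"
  (is "comeager ?S")
proof -
  define F where "F = range (\<lambda>(l1,l2,n). - UU l1 l2 n)"
  have "countable F" unfolding F_def by (intro countable_image countableI_type)
  moreover have "\<forall>T\<in>F. nowhere_dense T" using nowhere_dense_UU by (auto simp: F_def)
  moreover have "- ?S \<subseteq> \<Union>F"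
  proof
    fix \<alpha> assume a: "\<alpha> \<in> - ?S"
    show "\<alpha> \<in> \<Union>F"
    proof (rule ccontr)
      assume "\<alpha> \<notin> \<Union>F"
      then have "\<And>l1 l2 n. \<alpha> \<in> UU l1 l2 n" by (auto simp: F_def)
      then have "\<alpha> \<in> ?S" using main_inc by blast
      then show False using a by blast
    qed
  qed
  ultimately show ?thesis unfolding comeager_def meager_def by blast
qed

end
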